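(* In the Setting, under (SA1)–(SA3), let $\mathcal I\in\wp_k[n]$, distinct $i,j\in\mathcal I$ and distinct $\alpha,\beta\in\mathcal I^{\mathtt C}$ be such that $Y(\mathcal I)^{ij}_{\alpha\beta}$ is a radical term. Then $0\notin\chi(\mathcal I\mid^{ij}_{\alpha\gamma})$ for every $\gamma\in\mathcal I^{\mathtt C}$ with $\gamma\ne\alpha$.
   Context: Setting. $d\ge1$, $1\le k\le n$; $\mathbf t=(t_1,\dots,t_d)$ indeterminates; $\Lambda:=\mathbb C[t_1^{\pm1},\dots,t_d^{\pm1}]$ (a UFD whose units are exactly the elements $c\,\mathbf t^{\mathbf e}:=c\prod_u t_u^{e_u}$, $c\in\mathbb C\setminus\{0\}$, $\mathbf e\in\mathbb Z^d$), $\mathbb F$ its fraction field, $\overline{\mathbb F}$ an algebraic closure. $[n]=\{1,\dots,n\}$, $\wp_k[n]$ the $k$-subsets of $[n]$. For $\mathcal I\in\wp_k[n]$: $\mathcal I^{\mathtt C}=[n]\setminus\mathcal I$; $\mathcal I^i_\alpha=(\mathcal I\setminus\{i\})\cup\{\alpha\}$ ($i\in\mathcal I,\alpha\notin\mathcal I$); $\mathcal I^{ij}_{\alpha\beta}=(\mathcal I\setminus\{i,j\})\cup\{\alpha,\beta\}$. $\mathbf L$ ($k\times n$) and $\mathbf R$ ($n\times k$) have entries in $\overline{\mathbb F}$; $\Delta_{\mathbf L}(\mathcal I)$, $\Delta_{\mathbf R}(\mathcal I)$ are the maximal minors on columns, resp. rows, $\mathcal I$; $h(\mathcal I):=\Delta_{\mathbf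 L}(\mathcal I)\Delta_{\mathbf R}(\mathcal I)$; $\mathfrak G:=\{\mathcal I:\Delta_{\mathbf L}(\mathcal I)\ne0\}$. (SA1) all $\Delta_{\mathbf R}(\mathcal I)\ne0$; (SA2) $h(\mathcal I)$ is a unit of $\Lambda$ for every $\mathcal I\in\mathfrak G$; (SA3) $\mathbf L$ has no zero column. $Y(\mathcal I)^{ij}_{\alpha\beta}:=-\mathrm{sign}[(i-\alpha)(i-\beta)(j-\alpha)(j-\beta)]\frac{\Delta_{\mathbf R}(\mathcal I^i_\alpha)\Delta_{\mathbf R}(\mathcal I^j_\beta)}{\Delta_{\mathbf R}(\mathcal I^i_\beta)\Delta_{\mathbf R}(\mathcal I^j_\alpha)}$. The multiset $\chi(\mathcal I\mid^{ij}_{\alpha\beta}):=\{h(\mathcal I)h(\mathcal I^{ij}_{\alpha\beta}),\,h(\mathcal I^i_\alpha)h(\mathcal I^j_\beta),\,h(\mathcal I^i_\beta)h(\mathcal I^j_\alpha)\}$. $Y(\mathcal I)^{ij}_{\alpha\beta}$ is radical if $0\notin\chi(\mathcal I\mid^{ij}_{\alpha\beta})$ and $Y(\mathcal I)^{ij}_{\alpha\beta}\notin\mathbb F$. *)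

theory Defs
  imports "Jordan_Normal_Form.DL_Submatrix" "Jordan_Normal_Form.Determinant"
    "HOL-Computational_Algebra.Polynomial" "HOL-Library.Multiset"
begin

text \<open>Indices are 0-based: [n] = {0..<n}, variables t_u indexed by u in {0..<d}.
The field \<open>'a\<close> (algebraically closed) plays the role of the algebraic closure of
F = Frac(Lambda); \<open>iota\<close> embeds the complex numbers, \<open>t\<close> gives the indeterminates.\<close>

definition exps :: "nat \<Rightarrow> (nat \<Rightarrow> int) set" where
  "exps d = {e. \<forall>u. u \<ge> d \<longrightarrow> e u = 0}"

definition lmono :: "(nat \<Rightarrow> 'a::field) \<Rightarrow> nat \<Rightarrow> (nat \<Rightarrow> int) \<Rightarrow> 'a" where
  "lmono t d e = (\<Prod>u<d. t u powi e u)"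

text \<open>Laurent polynomial ring Lambda = C[t^(+-1)] inside the field.\<close>
definition Lam :: "(complex \<Rightarrow> 'a::field) \<Rightarrow> (nat \<Rightarrow> 'a) \<Rightarrow> nat \<Rightarrow> 'a set" where
  "Lam \<iota> t d = {\<Sum>e\<in>S. \<iota> (c e) * lmono t d e | S c. finite S \<and> S \<subseteq> exps d}"

definition Lam_units :: "(complex \<Rightarrow> 'a::field) \<Rightarrow> (nat \<Rightarrow> 'a) \<Rightarrow> nat \<Rightarrow> 'a set" where
  "Lam_units \<iota> t d = {x \<in> Lam \<iota> t d. \<exists>y \<in> Lam \<iota> t d. x * y = 1}"

definition FracF :: "(complex \<Rightarrow> 'a::field) \<Rightarrow> (nat \<Rightarrow> 'a) \<Rightarrow> nat \<Rightarrow> 'a set" where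
  "FracF \<iota> t d = {a / b | a b. a \<in> Lam \<iota> t d \<and> b \<in> Lam \<iota> t d \<and> b \<noteq> 0}"

text \<open>The setting: iota is a ring embedding of C, the t_u are nonzero and algebraically
independent over C (distinct Laurent monomials are linearly independent), and the ambient
algebraically closed field is algebraic over F, i.e. it is an algebraic closure of F.\<close>
definition setting :: "(complex \<Rightarrow> 'a::field) \<Rightarrow> (nat \<Rightarrow> 'a) \<Rightarrow> nat \<Rightarrow> bool" where
  "setting \<iota> t d \<longleftrightarrow>
     (\<forall>a b. \<iota> (a + b) = \<iota> a + \<iota> b) \<and> (\<forall>a b. \<iota> (a * b) = \<iota> a * \<iota> b) \<and> \<iota> 1 = 1 \<and>
     (\<forall>u<d. t u \<noteq> 0) \<and>
     (\<forall>S c. finite S \<and> S \<subseteq> exps d \<and> (\<Sum>e\<in>S. \<iota> (c e) * lmono t d e) = 0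
            \<longrightarrow> (\<forall>e\<in>S. c e = 0)) \<and>
     (\<forall>x. \<exists>p. p \<noteq> 0 \<and> (\<forall>i. coeff p i \<in> FracF \<iota> t d) \<and> poly p x = 0)"

definition ksubsets :: "nat \<Rightarrow> nat \<Rightarrow> nat set set" where
  "ksubsets k n = {I. I \<subseteq> {0..<n} \<and> card I = k}"

definition compl :: "nat \<Rightarrow> nat set \<Rightarrow> nat set" where
  "compl n I = {0..<n} - I"

definition swap1 :: "nat set \<Rightarrow> nat \<Rightarrow> nat \<Rightarrow> nat set" where
  "swap1 I i \<alpha> = insert \<alpha> (I - {i})"

definition swap2 :: "nat set \<Rightarrow> nat \<Rightarrow> nat \<Rightarrow> nat \<Rightarrow> nat \<Rightarrow> nat set" where
  "swap2 I i j \<alpha> \<beta> = (I - {i, j}) \<union> {\<alpha>, \<beta>}"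

definition DeltaL :: "'a::comm_ring_1 mat \<Rightarrow> nat set \<Rightarrow> 'a" where
  "DeltaL L I = det (submatrix L {0..<dim_row L} I)"

definition DeltaR :: "'a::comm_ring_1 mat \<Rightarrow> nat set \<Rightarrow> 'a" where
  "DeltaR R I = det (submatrix R I {0..<dim_col R})"

definition hh :: "'a::comm_ring_1 mat \<Rightarrow> 'a mat \<Rightarrow> nat set \<Rightarrow> 'a" where
  "hh L R I = DeltaL L I * DeltaR R I"

definition GG :: "'a::comm_ring_1 mat \<Rightarrow> nat \<Rightarrow> nat \<Rightarrow> nat set set" where
  "GG L k n = {I \<in> ksubsets k n. DeltaL L I \<noteq> 0}"

definition Yterm :: "'a::field mat \<Rightarrow> nat set \<Rightarrow> nat \<Rightarrow> nat \<Rightarrow> nat \<Rightarrow> nat \<Rightarrow> 'a" where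
  "Yterm R I i j \<alpha> \<beta> =
     - of_int (sgn ((int i - int \<alpha>) * (int i - int \<beta>) * (int j - int \<alpha>) * (int j - int \<beta>)))
     * (DeltaR R (swap1 I i \<alpha>) * DeltaR R (swap1 I j \<beta>))
     / (DeltaR R (swap1 I i \<beta>) * DeltaR R (swap1 I j \<alpha>))"

definition chi :: "'a::comm_ring_1 mat \<Rightarrow> 'a mat \<Rightarrow> nat set \<Rightarrow> nat \<Rightarrow> nat \<Rightarrow> nat \<Rightarrow> nat \<Rightarrow> 'a multiset" where
  "chi L R I i j \<alpha> \<beta> =
     {# hh L R I * hh L R (swap2 I i j \<alpha> \<beta>),
        hh L R (swap1 I i \<alpha>) * hh L R (swap1 I j \<beta>),
        hh L R (swap1 I i \<beta>) * hh L R (swap1 I j \<alpha>) #}"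

definition radical :: "(complex \<Rightarrow> 'a::field) \<Rightarrow> (nat \<Rightarrow> 'a) \<Rightarrow> nat \<Rightarrow> 'a mat \<Rightarrow> 'a mat
    \<Rightarrow> nat set \<Rightarrow> nat \<Rightarrow> nat \<Rightarrow> nat \<Rightarrow> nat \<Rightarrow> bool" where
  "radical \<iota> t d L R I i j \<alpha> \<beta> \<longleftrightarrow>
     0 \<notin># chi L R I i j \<alpha> \<beta> \<and> Yterm R I i j \<alpha> \<beta> \<notin> FracF \<iota> t d"

end

theory Submission
  imports Defs
begin


context
  fixes \<iota> :: "complex \<Rightarrow> 'a::field" and t :: "nat \<Rightarrow> 'a" and d :: nat
  assumes S: "setting \<iota> t d"
begin

lemma iota_add: "\<iota> (a + b) = \<iota> a + \<iota> b" using S[unfolded setting_def, THEN conjunct1] by blast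
lemma iota_mult: "\<iota> (a * b) = \<iota> a * \<iota> b" using S[unfolded setting_def, THEN conjunct2, THEN conjunct1] by blast
lemma iota_1: "\<iota> 1 = 1" using S[unfolded setting_def, THEN conjunct2, THEN conjunct2, THEN conjunct1] by blast
lemma iota_0: "\<iota> 0 = 0"
proof -
  have "\<iota> 0 = \<iota> 0 + \<iota> 0" using iota_add[of 0 0] by simp
  then show ?thesis by (metis add_cancel_right_right)
qed
lemma iota_neg: "\<iota> (- a) = - \<iota> a"
proof -
  have "\<iota> (a + - a) = \<iota> a + \<iota> (-a)" by (rule iota_add)
  then show ?thesis by (simp add: iota_0 eq_neg_iff_add_eq_0 add.commute)
qed
lemma iota_sum: "finite A \<Longrightarrow> \<iota> (\<Sum>x\<in>A. f x) = (\<Sum>x\<in>A. \<iota> (f x))"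
  by (induction A rule: finite_induct) (auto simp: iota_0 iota_add)

lemma t_nz: "u < d \<Longrightarrow> t u \<noteq> 0" using S[unfolded setting_def, THEN conjunct2, THEN conjunct2, THEN conjunct2, THEN conjunct1] by blast

lemma lmono_add: "lmono t d (\<lambda>u. e u + f u) = lmono t d e * lmono t d f"
  unfolding lmono_def prod.distrib[symmetric]
  by (rule prod.cong, simp, simp add: power_int_add t_nz)

lemma lmono_0: "lmono t d (\<lambda>u. 0) = 1" unfolding lmono_def by simp

lemma LamI: "finite S \<Longrightarrow> S \<subseteq> exps d \<Longrightarrow> x = (\<Sum>e\<in>S. \<iota> (c e) * lmono t d e) \<Longrightarrow> x \<in> Lam \<iota> t d"
  unfolding Lam_def mem_Collect_eq by (intro exI[of _ S] exI[of _ c]) auto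

lemma Lam_extend:
  assumes "finite S'" "S \<subseteq> S'"
  shows "(\<Sum>e\<in>S. \<iota> (c e) * lmono t d e) = (\<Sum>e\<in>S'. \<iota> (if e \<in> S then c e else 0) * lmono t d e)"
proof -
  have "(\<Sum>e\<in>S'. \<iota> (if e \<in> S then c e else 0) * lmono t d e) = (\<Sum>e\<in>S. \<iota> (if e \<in> S then c e else 0) * lmono t d e)"
    by (rule sum.mono_neutral_right[OF assms]) (auto simp: iota_0)
  then show ?thesis by simp
qed

lemma Lam_add: assumes "x \<in> Lam \<iota> t d" "y \<in> Lam \<iota> t d" shows "x + y \<in> Lam \<iota> t d"
proof -
  from assms obtain S c S' c' where x: "x = (\<Sum>e\<in>S. \<iota> (c e) * lmono t d e)" "finite S" "S \<subseteq> exps d"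
    and y: "y = (\<Sum>e\<in>S'. \<iota> (c' e) * lmono t d e)" "finite S'" "S' \<subseteq> exps d"
    unfolding Lam_def by blast
  let ?U = "S \<union> S'"
  have "x = (\<Sum>e\<in>?U. \<iota> (if e \<in> S then c e else 0) * lmono t d e)"
    using Lam_extend[of ?U S c] x y by auto
  moreover have "y = (\<Sum>e\<in>?U. \<iota> (if e \<in> S' then c' e else 0) * lmono t d e)"
    using Lam_extend[of ?U S' c'] x y by auto
  ultimately have "x + y = (\<Sum>e\<in>?U. \<iota> ((if e \<in> S then c e else 0) + (if e \<in> S' then c' e else 0)) * lmono t d e)"
    by (simp add: sum.distrib[symmetric] iota_add algebra_simps)
  then show ?thesis using x y by (intro LamI[of ?U]) auto
qed

lemma Lam_neg: assumes "x \<in> Lam \<iota> t d" shows "- x \<in> Lam \<iota> t d"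
proof -
  from assms obtain S c where x: "x = (\<Sum>e\<in>S. \<iota> (c e) * lmono t d e)" "finite S" "S \<subseteq> exps d"
    unfolding Lam_def by blast
  have "- x = (\<Sum>e\<in>S. \<iota> (- c e) * lmono t d e)" using x by (simp add: iota_neg sum_negf)
  then show ?thesis using x by (intro LamI[of S]) auto
qed

lemma Lam_1: "1 \<in> Lam \<iota> t d"
proof -
  have "1 = (\<Sum>e\<in>{\<lambda>u. 0}. \<iota> 1 * lmono t d e)" by (simp add: iota_1 lmono_0)
  moreover have "{\<lambda>u. 0::int} \<subseteq> exps d" by (auto simp: exps_def)
  ultimately show ?thesis by (intro LamI[of "{\<lambda>u. 0}"]) auto
qed

lemma Lam_0: "0 \<in> Lam \<iota> t d"
proof -
  have "0 = (\<Sum>e\<in>{}. \<iota> 1 * lmono t d e)" by simp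
  then show ?thesis by (intro LamI[of "{}"]) auto
qed

lemma Lam_mult: assumes "x \<in> Lam \<iota> t d" "y \<in> Lam \<iota> t d" shows "x * y \<in> Lam \<iota> t d"
proof -
  from assms obtain S c S' c' where x: "x = (\<Sum>e\<in>S. \<iota> (c e) * lmono t d e)" "finite S" "S \<subseteq> exps d"
    and y: "y = (\<Sum>e\<in>S'. \<iota> (c' e) * lmono t d e)" "finite S'" "S' \<subseteq> exps d"
    unfolding Lam_def by blast
  define g where "g = (\<lambda>p::(nat\<Rightarrow>int)\<times>(nat\<Rightarrow>int). (\<lambda>u. fst p u + snd p u))"
  let ?U = "g ` (S \<times> S')"
  define h where "h = (\<lambda>p. \<iota> (c (fst p) * c' (snd p)) * lmono t d (g p))"
  have fin: "finite (S \<times> S')" using x y by auto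
  have "x * y = (\<Sum>e\<in>S. \<Sum>f\<in>S'. \<iota> (c e) * lmono t d e * (\<iota> (c' f) * lmono t d f))"
    using x y by (simp add: sum_product)
  also have "\<dots> = (\<Sum>p\<in>S \<times> S'. h p)"
    unfolding sum.cartesian_product h_def g_def
    by (rule sum.cong, simp, auto simp: lmono_add iota_mult)
  also have "\<dots> = (\<Sum>q\<in>?U. sum h {p \<in> S \<times> S'. g p = q})"
    by (rule sum.group[symmetric], use fin in auto)
  also have "\<dots> = (\<Sum>q\<in>?U. \<iota> (\<Sum>p\<in>{p \<in> S \<times> S'. g p = q}. c (fst p) * c' (snd p)) * lmono t d q)"
  proof (rule sum.cong, simp)
    fix q assume "q \<in> ?U"
    have "sum h {p \<in> S \<times> S'. g p = q} = (\<Sum>p\<in>{p \<in> S \<times> S'. g p = q}. \<iota> (c (fst p) * c' (snd p)) * lmono t d q)"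
      unfolding h_def by (rule sum.cong) auto
    also have "\<dots> = \<iota> (\<Sum>p\<in>{p \<in> S \<times> S'. g p = q}. c (fst p) * c' (snd p)) * lmono t d q"
      using fin by (simp add: iota_sum sum_distrib_right)
    finally show "sum h {p \<in> S \<times> S'. g p = q} = \<iota> (\<Sum>p\<in>{p \<in> S \<times> S'. g p = q}. c (fst p) * c' (snd p)) * lmono t d q" .
  qed
  finally have eq: "x * y = (\<Sum>q\<in>?U. \<iota> (\<Sum>p\<in>{p \<in> S \<times> S'. g p = q}. c (fst p) * c' (snd p)) * lmono t d q)" .
  have "?U \<subseteq> exps d" using x y by (auto simp: exps_def g_def subset_iff)
  moreover have "finite ?U" using fin by simp
  ultimately show ?thesis using eq by (intro LamI[of ?U]) auto
qed

abbreviation "Fs \<equiv> FracF \<iota> t d"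

lemma F_of_Lam: "x \<in> Lam \<iota> t d \<Longrightarrow> x \<in> Fs"
  unfolding FracF_def using Lam_1 by force

lemma F_0: "0 \<in> Fs" using F_of_Lam Lam_0 by blast
lemma F_1: "1 \<in> Fs" using F_of_Lam Lam_1 by blast

lemma F_add: assumes "x \<in> Fs" "y \<in> Fs" shows "x + y \<in> Fs"
proof -
  from assms obtain a b a' b' where "x = a/b" "a \<in> Lam \<iota> t d" "b \<in> Lam \<iota> t d" "b \<noteq> 0"
    "y = a'/b'" "a' \<in> Lam \<iota> t d" "b' \<in> Lam \<iota> t d" "b' \<noteq> 0" unfolding FracF_def by blast
  then have "x + y = (a*b' + a'*b)/(b*b')" "a*b' + a'*b \<in> Lam \<iota> t d" "b*b' \<in> Lam \<iota> t d" "b * b' \<noteq> 0"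
    by (auto simp: field_simps Lam_add Lam_mult)
  then show ?thesis unfolding FracF_def by blast
qed

lemma F_mult: assumes "x \<in> Fs" "y \<in> Fs" shows "x * y \<in> Fs"
proof -
  from assms obtain a b a' b' where "x = a/b" "a \<in> Lam \<iota> t d" "b \<in> Lam \<iota> t d" "b \<noteq> 0"
    "y = a'/b'" "a' \<in> Lam \<iota> t d" "b' \<in> Lam \<iota> t d" "b' \<noteq> 0" unfolding FracF_def by blast
  then have "x * y = (a*a')/(b*b')" "a*a' \<in> Lam \<iota> t d" "b*b' \<in> Lam \<iota> t d" "b * b' \<noteq> 0"
    by (auto simp: field_simps Lam_mult)
  then show ?thesis unfolding FracF_def by blast
qed

lemma F_neg: assumes "x \<in> Fs" shows "- x \<in> Fs"
proof -
  from assms obtain a b where "x = a/b" "a \<in> Lam \<iota> t d" "b \<in> Lam \<iota> t d" "b \<noteq> 0"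
    unfolding FracF_def by blast
  then have "- x = (-a)/b" "-a \<in> Lam \<iota> t d" by (auto simp: Lam_neg)
  then show ?thesis unfolding FracF_def using \<open>b \<in> _\<close> \<open>b \<noteq> 0\<close> by blast
qed

lemma F_inv: assumes "x \<in> Fs" shows "inverse x \<in> Fs"
proof (cases "x = 0")
  case True then show ?thesis using F_0 by simp
next
  case False
  from assms obtain a b where "x = a/b" "a \<in> Lam \<iota> t d" "b \<in> Lam \<iota> t d" "b \<noteq> 0"
    unfolding FracF_def by blast
  with False have "inverse x = b / a" "a \<noteq> 0" by auto
  then show ?thesis unfolding FracF_def using \<open>b \<in> _\<close> \<open>a \<in> _\<close> by blast
qed

lemma F_div: "x \<in> Fs \<Longrightarrow> y \<in> Fs \<Longrightarrow> x / y \<in> Fs"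
  by (simp add: divide_inverse F_mult F_inv)
lemma F_diff: "x \<in> Fs \<Longrightarrow> y \<in> Fs \<Longrightarrow> x - y \<in> Fs"
  using F_add F_neg by (metis diff_conv_add_uminus)

lemma F_unit: "u \<in> Lam_units \<iota> t d \<Longrightarrow> u \<in> Fs \<and> u \<noteq> 0"
  unfolding Lam_units_def using F_of_Lam by force

lemma F_of_int: "of_int z \<in> Fs"
proof -
  have N: "of_nat m \<in> Fs" for m by (induction m) (auto simp: F_0 F_1 F_add)
  show ?thesis
  proof (cases "z \<ge> 0")
    case True
    then have "of_int z = (of_nat (nat z) :: 'a)" by simp
    then show ?thesis using N by simp
  next
    case False
    then have "of_int z = - (of_nat (nat (- z)) :: 'a)" by simp
    then show ?thesis using N F_neg by simp
  qed
qed

end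


lemma adj_vec:
  assumes A: "A \<in> carrier_mat m m" and z: "z \<in> carrier_vec m" and c: "c < m"
  shows "(adj_mat A *\<^sub>v z) $ c = det (replace_col A z c)"
proof -
  have Az: "replace_col A z c \<in> carrier_mat m m" using A by (auto simp: replace_col_def)
  have "(adj_mat A *\<^sub>v z) $ c = row (adj_mat A) c \<bullet> z" using adj_mat[OF A] z c by auto
  also have "\<dots> = det (replace_col A z c)" unfolding scalar_prod_def using z c A
    by (subst laplace_expansion_column[OF Az c], auto intro!: sum.cong arg_cong[of _ _ det] 
      arg_cong[of _ _ "\<lambda> x. _ * x"] eq_matI
      simp: replace_col_def adj_mat_def Matrix.row_def cofactor_def mat_delete_def ac_simps)
  finally show ?thesis .
qed

lemma det_vec_adj:
  assumes A: "A \<in> carrier_mat m m" and z: "z \<in> carrier_vec m"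
  shows "det A \<cdot>\<^sub>v z = A *\<^sub>v (adj_mat A *\<^sub>v z)"
proof -
  have "det A \<cdot>\<^sub>v z = det A \<cdot>\<^sub>v (1\<^sub>m m *\<^sub>v z)" using z by auto
  also have "\<dots> = (det A \<cdot>\<^sub>m 1\<^sub>m m) *\<^sub>v z" using A z by auto
  also have "\<dots> = (A * adj_mat A) *\<^sub>v z" using adj_mat[OF A] by simp
  also have "\<dots> = A *\<^sub>v (adj_mat A *\<^sub>v z)" using adj_mat[OF A] A z
    by (metis assoc_mult_mat_vec)
  finally show ?thesis .
qed

lemma replace_col_lin:
  assumes B: "B \<in> carrier_mat m m" and v: "v \<in> carrier_vec m" and q: "q < m"
  shows "det (replace_col B v q) = (\<Sum>r<m. v $ r * cofactor B r q)"
proof -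
  have Bv: "replace_col B v q \<in> carrier_mat m m" using B by (auto simp: replace_col_def)
  have "det (replace_col B v q) = (\<Sum>r<m. replace_col B v q $$ (r,q) * cofactor (replace_col B v q) r q)"
    by (rule laplace_expansion_column[OF Bv q])
  also have "\<dots> = (\<Sum>r<m. v $ r * cofactor B r q)"
  proof (rule sum.cong, simp)
    fix r assume r: "r \<in> {..<m}"
    have "mat_delete (replace_col B v q) r q = mat_delete B r q"
      using B q by (auto intro!: eq_matI simp: mat_delete_def replace_col_def)
    then show "replace_col B v q $$ (r,q) * cofactor (replace_col B v q) r q = v $ r * cofactor B r q"
      using r B q by (simp add: replace_col_def cofactor_def)
  qed
  finally show ?thesis .
qed

lemma pl_gen:
  fixes A :: "'a::comm_ring_1 mat"
  assumes A: "A \<in> carrier_mat m m" and y: "y \<in> carrier_vec m" and z: "z \<in> carrier_vec m"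
    and p: "p < m" and q: "q < m" and pq: "p \<noteq> q"
  defines "B \<equiv> replace_col A y p"
  shows "det A * det (replace_col B z q) =
     det (replace_col A z p) * det (replace_col B (col A p) q)
   + det (replace_col A z q) * det (replace_col B (col A q) q)"
proof -
  have B: "B \<in> carrier_mat m m" using A by (auto simp: B_def replace_col_def)
  define w where "w = adj_mat A *\<^sub>v z"
  define cof where "cof r = cofactor B r q" for r
  have phi: "det (replace_col B v q) = (\<Sum>r<m. v $ r * cof r)" if "v \<in> carrier_vec m" for v
    unfolding cof_def by (rule replace_col_lin[OF B that q])
  have colA: "col A c \<in> carrier_vec m" for c using A by auto
  have "det A * det (replace_col B z q) = (\<Sum>r<m. (det A * z $ r) * cof r)"
    by (simp add: phi[OF z] sum_distrib_left mult.assoc)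
  also have "\<dots> = (\<Sum>r<m. (A *\<^sub>v w) $ r * cof r)"
  proof (rule sum.cong, simp)
    fix r assume "r \<in> {..<m}"
    then have "(det A \<cdot>\<^sub>v z) $ r = det A * z $ r" using z by auto
    then show "det A * z $ r * cof r = (A *\<^sub>v w) $ r * cof r"
      using det_vec_adj[OF A z] unfolding w_def by simp
  qed
  also have "\<dots> = (\<Sum>r<m. (\<Sum>c<m. A $$ (r,c) * w $ c) * cof r)"
  proof (rule sum.cong, simp)
    fix r assume r: "r \<in> {..<m}"
    have wc: "w \<in> carrier_vec m" using A z unfolding w_def using adj_mat[OF A] by auto
    show "(A *\<^sub>v w) $ r * cof r = (\<Sum>c<m. A $$ (r,c) * w $ c) * cof r"
      using r A wc by (auto simp: mult_mat_vec_def scalar_prod_def Matrix.row_def atLeast0LessThan intro!: sum.cong)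
  qed
  also have "\<dots> = (\<Sum>c<m. w $ c * (\<Sum>r<m. col A c $ r * cof r))"
  proof -
    have "(\<Sum>r<m. (\<Sum>c<m. A $$ (r,c) * w $ c) * cof r) = (\<Sum>r<m. \<Sum>c<m. A $$ (r,c) * w $ c * cof r)"
      by (simp only: sum_distrib_right)
    also have "\<dots> = (\<Sum>c<m. \<Sum>r<m. A $$ (r,c) * w $ c * cof r)"
      by (rule sum.swap)
    also have "\<dots> = (\<Sum>c<m. w $ c * (\<Sum>r<m. col A c $ r * cof r))"
      unfolding sum_distrib_left
      by (rule sum.cong, simp, rule sum.cong, simp, use A in \<open>simp add: ac_simps\<close>)
    finally show ?thesis .
  qed
  also have "\<dots> = (\<Sum>c<m. w $ c * det (replace_col B (col A c) q))"
    by (simp add: phi[OF colA])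
  also have "\<dots> = (\<Sum>c\<in>{p,q}. w $ c * det (replace_col B (col A c) q))"
  proof (rule sum.mono_neutral_right)
    show "\<forall>c\<in>{..<m} - {p, q}. w $ c * det (replace_col B (col A c) q) = 0"
    proof
      fix c assume "c \<in> {..<m} - {p, q}"
      then have c: "c < m" "c \<noteq> p" "c \<noteq> q" by auto
      have "det (replace_col B (col A c) q) = 0"
        by (rule det_identical_columns[of _ m c q], use A c q in
          \<open>auto simp: replace_col_def B_def intro!: eq_vecI\<close>)
      then show "w $ c * det (replace_col B (col A c) q) = 0" by simp
    qed
  qed (use p q in auto)
  also have "\<dots> = w $ p * det (replace_col B (col A p) q) + w $ q * det (replace_col B (col A q) q)"
    using pq by simp
  finally show ?thesis unfolding w_def using adj_vec[OF A z p] adj_vec[OF A z q] by simp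
qed


definition colmat :: "'a mat \<Rightarrow> (nat \<Rightarrow> nat) \<Rightarrow> nat \<Rightarrow> 'a mat" where
  "colmat M g m = mat (dim_row M) m (\<lambda>(r,c). M $$ (r, g c))"

lemma pick_in: "finite J \<Longrightarrow> c < card J \<Longrightarrow> pick J c \<in> J"
  by (rule pick_in_set) simp

lemma pick_range_eq: assumes "finite K" shows "pick K ` {0..<card K} = K"
proof
  show "pick K ` {0..<card K} \<subseteq> K" using pick_in[OF assms] by auto
  show "K \<subseteq> pick K ` {0..<card K}"
  proof
    fix a assume a: "a \<in> K"
    have "{b\<in>K. b < a} \<subset> K" using a by auto
    then have "card {b\<in>K. b < a} < card K" using assms by (simp add: psubset_card_mono)
    then show "a \<in> pick K ` {0..<card K}" using pick_card_in_set[OF a] by force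
  qed
qed

lemma pick_inj: "inj_on (pick K) {0..<card K}"
  unfolding inj_on_def by (metis atLeastLessThan_iff nat_neq_iff pick_mono)

lemma sub_colmat:
  assumes M: "M \<in> carrier_mat k n" and J: "J \<subseteq> {0..<n}" "card J = k"
  shows "submatrix M {0..<k} J = colmat M (pick J) k"
proof -
  have fJ: "finite J" using J finite_subset by blast
  have r: "card {i. i < dim_row M \<and> i < k} = k" using M by auto
  have c: "{j. j < dim_col M \<and> j \<in> J} = J" using M J by auto
  have pk: "pick {0..<k} i = i" if "i < k" for i
  proof -
    have "{a\<in>{0..<k}. a < i} = {0..<i}" using that by auto
    then show ?thesis using pick_card_in_set[of i "{0..<k}"] that by auto
  qed
  show ?thesis
    using M by (intro eq_matI) (auto simp: submatrix_def colmat_def r c J pk)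
qed

lemma colmat_sign:
  fixes M :: "'a::comm_ring_1 mat"
  assumes M: "M \<in> carrier_mat k n" and J: "J \<subseteq> {0..<n}" "card J = k"
    and g: "inj_on g {0..<k}" "g ` {0..<k} = J"
  shows "\<exists>s. (s = 1 \<or> s = -1) \<and> det (colmat M g k) = s * DeltaL M J"
proof -
  have fJ: "finite J" using J finite_subset by blast
  define p where "p c = (if c < k then card {a\<in>J. a < g c} else c)" for c
  have gJ: "c < k \<Longrightarrow> g c \<in> J" for c using g by auto
  have pk: "p c < k" if "c < k" for c
  proof -
    have "{a\<in>J. a < g c} \<subset> J" using gJ[OF that] by auto
    then have "card {a\<in>J. a < g c} < card J" using fJ by (simp add: psubset_card_mono)
    then show ?thesis using that J unfolding p_def by simp
  qed
  have pp: "pick J (p c) = g c" if "c < k" for c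
    using pick_card_in_set[OF gJ[OF that]] that unfolding p_def by simp
  have inj: "inj_on p {0..<k}"
  proof (rule inj_onI)
    fix c c' assume "c \<in> {0..<k}" "c' \<in> {0..<k}" "p c = p c'"
    then show "c = c'" using pp g(1) by (metis atLeastLessThan_iff inj_onD)
  qed
  have "p ` {0..<k} = {0..<k}" by (rule endo_inj_surj, use pk inj in auto)
  then have perm: "p permutes {0..<k}"
    by (intro bij_imp_permutes) (auto simp: bij_betw_def inj p_def)
  define C where "C = colmat M (pick J) k"
  have C: "C \<in> carrier_mat k k" using M by (simp add: C_def colmat_def)
  have "transpose_mat (colmat M g k) = mat k k (\<lambda>(i,j). transpose_mat C $$ (p i, j))"
    by (rule eq_matI, use M pk pp in \<open>auto simp: colmat_def C_def\<close>)
  then have "det (transpose_mat (colmat M g k)) = signof p * det (transpose_mat C)"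
    using det_permute_rows[of "transpose_mat C" k p] C perm by simp
  moreover have "det (transpose_mat (colmat M g k)) = det (colmat M g k)"
    by (rule det_transpose[of _ k], use M in \<open>simp add: colmat_def\<close>)
  moreover have "det (transpose_mat C) = det C" by (rule det_transpose[OF C])
  moreover have "det C = DeltaL M J" unfolding DeltaL_def C_def using sub_colmat[OF M J] M by simp
  ultimately have "det (colmat M g k) = signof p * DeltaL M J" by simp
  then show ?thesis by (intro exI[of _ "signof p"]) (auto simp: sign_def)
qed

definition gfun :: "nat set \<Rightarrow> nat \<Rightarrow> nat \<Rightarrow> nat \<Rightarrow> nat \<Rightarrow> nat" where
  "gfun K k u v c = (if c < k - 2 then pick K c else if c = k - 2 then u else if c = k - 1 then v else 0)"

lemma gfun_props:
  assumes K: "finite K" "card K + 2 = k" and uv: "u \<noteq> v" "u \<notin> K" "v \<notin> K"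
  shows "inj_on (gfun K k u v) {0..<k}" "gfun K k u v ` {0..<k} = insert u (insert v K)"
proof -
  have pK: "c < k - 2 \<Longrightarrow> pick K c \<in> K" for c using pick_in[OF K(1)] K by auto
  show "inj_on (gfun K k u v) {0..<k}"
  proof (rule inj_onI)
    fix c c' assume c: "c \<in> {0..<k}" "c' \<in> {0..<k}" "gfun K k u v c = gfun K k u v c'"
    show "c = c'"
    proof (cases "c < k - 2 \<and> c' < k - 2")
      case True
      then show ?thesis using c pick_inj[of K] K unfolding gfun_def by (auto simp: inj_on_def)
    next
      case False
      then show ?thesis using c pK uv unfolding gfun_def by (auto split: if_splits)
    qed
  qed
  have "gfun K k u v ` {0..<k} = pick K ` {0..<k-2} \<union> {u, v}"
  proof -
    have "{0..<k} = {0..<k-2} \<union> {k-2, k-1}" using K by auto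
    then show ?thesis using K unfolding gfun_def by (auto simp: image_Un)
  qed
  also have "k - 2 = card K" using K by simp
  then have "pick K ` {0..<k-2} = K" using pick_range_eq[OF K(1)] by simp
  finally show "gfun K k u v ` {0..<k} = insert u (insert v K)" by auto
qed

lemma replace_colmat:
  assumes M: "M \<in> carrier_mat k n" and c: "c < k"
  shows "replace_col (colmat M g k) (col M u) c = colmat M (g(c := u)) k"
  using M c by (auto intro!: eq_matI simp: replace_col_def colmat_def col_def)

lemma col_colmat:
  assumes M: "M \<in> carrier_mat k n" and c: "c < k"
  shows "col (colmat M g k) c = col M (g c)"
  using M c by (auto intro!: eq_vecI simp: colmat_def col_def)

lemma sign_cases: "(s::'a::comm_ring_1) = 1 \<or> s = -1 \<Longrightarrow> s * s = 1" by auto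

lemma sign_comb:
  fixes a1 :: "'a::comm_ring_1"
  assumes s: "a3*a3 = 1" "a4*a4=1" "a5*a5=1" "a6*a6=1"
   and d: "Dwx = a1 * Fwx" "Dyz = a2 * Fyz" "Dzx = a3 * Fzx" "Dyw = a4 * Fyw" "Dwz = a5*Fwz" "Dyx = a6*Fyx"
   and m: "Fwx * Fyz = Fzx * Fyw + Fwz * Fyx"
  shows "Dwx * Dyz = (a1*a2*a3*a4) * (Dzx * Dyw) + (a1*a2*a5*a6) * (Dwz * Dyx)"
proof -
  have 1: "(a1*a2*a3*a4) * (Dzx * Dyw) = a1*a2*(a3*a3)*(a4*a4)*(Fzx*Fyw)" unfolding d by (simp add: ac_simps)
  have 2: "(a1*a2*a5*a6) * (Dwz * Dyx) = a1*a2*(a5*a5)*(a6*a6)*(Fwz*Fyx)" unfolding d by (simp add: ac_simps)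
  have 3: "Dwx * Dyz = a1*a2*(Fwx * Fyz)" unfolding d by (simp add: ac_simps)
  show ?thesis unfolding 1 2 3 s m by (simp add: algebra_simps)
qed

lemma plucker_L:
  fixes M :: "'a::comm_ring_1 mat"
  assumes M: "M \<in> carrier_mat k n" and K: "K \<subseteq> {0..<n}" "card K + 2 = k"
    and in_n: "w < n" "x < n" "y < n" "z < n"
    and notK: "w \<notin> K" "x \<notin> K" "y \<notin> K" "z \<notin> K"
    and dist: "w \<noteq> x" "w \<noteq> y" "w \<noteq> z" "x \<noteq> y" "x \<noteq> z" "y \<noteq> z"
  shows "\<exists>s1 s2. (s1 = 1 \<or> s1 = -1) \<and> (s2 = 1 \<or> s2 = -1) \<and>
    DeltaL M (insert w (insert x K)) * DeltaL M (insert y (insert z K)) =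
    s1 * (DeltaL M (insert z (insert x K)) * DeltaL M (insert y (insert w K))) +
    s2 * (DeltaL M (insert w (insert z K)) * DeltaL M (insert y (insert x K)))"
proof -
  have fK: "finite K" using K finite_subset by blast
  define F where "F u v = det (colmat M (gfun K k u v) k)" for u v
  define D where "D u v = DeltaL M (insert u (insert v K))" for u v
  have FD: "\<exists>s. (s = 1 \<or> s = -1) \<and> D u v = s * F u v"
    if "u \<noteq> v" "u \<notin> K" "v \<notin> K" "u < n" "v < n" for u v
  proof -
    have cardJ: "card (insert u (insert v K)) = k" using that fK K by simp
    have "insert u (insert v K) \<subseteq> {0..<n}" using that K by auto
    from colmat_sign[OF M this cardJ gfun_props[OF fK K(2) that(1-3)]]
    obtain s where s: "s = 1 \<or> s = -1" "F u v = s * D u v" unfolding F_def D_def by blast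
    then have "D u v = s * F u v" by (auto simp: algebra_simps)
    then show ?thesis using s by blast
  qed
  have k2: "k \<ge> 2" using K by simp
  define A where "A = colmat M (gfun K k w x) k"
  have A: "A \<in> carrier_mat k k" using M by (simp add: A_def colmat_def)
  have cy: "col M y \<in> carrier_vec k" "col M z \<in> carrier_vec k" using M by auto
  have p: "k - 2 < k" and q: "k - 1 < k" and pq: "k - 2 \<noteq> k - 1" using k2 by auto
  have e1: "replace_col A (col M y) (k-2) = colmat M (gfun K k y x) k"
    unfolding A_def by (subst replace_colmat[OF M p], rule arg_cong[of _ _ "\<lambda>g. colmat M g k"], rule ext, use k2 in \<open>auto simp: gfun_def\<close>)
  have e2: "replace_col (colmat M (gfun K k y x) k) (col M z) (k-1) = colmat M (gfun K k y z) k"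
    by (subst replace_colmat[OF M q], rule arg_cong[of _ _ "\<lambda>g. colmat M g k"], rule ext, use k2 in \<open>auto simp: gfun_def\<close>)
  have e3: "replace_col A (col M z) (k-2) = colmat M (gfun K k z x) k"
    unfolding A_def by (subst replace_colmat[OF M p], rule arg_cong[of _ _ "\<lambda>g. colmat M g k"], rule ext, use k2 in \<open>auto simp: gfun_def\<close>)
  have e4: "col A (k-2) = col M w" unfolding A_def col_colmat[OF M p] by (simp add: gfun_def)
  have e5: "col A (k-1) = col M x" unfolding A_def col_colmat[OF M q] using k2 by (auto simp: gfun_def)
  have e6: "replace_col (colmat M (gfun K k y x) k) (col M w) (k-1) = colmat M (gfun K k y w) k"
    by (subst replace_colmat[OF M q], rule arg_cong[of _ _ "\<lambda>g. colmat M g k"], rule ext, use k2 in \<open>auto simp: gfun_def\<close>)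
  have e7: "replace_col A (col M z) (k-1) = colmat M (gfun K k w z) k"
    unfolding A_def by (subst replace_colmat[OF M q], rule arg_cong[of _ _ "\<lambda>g. colmat M g k"], rule ext, use k2 in \<open>auto simp: gfun_def\<close>)
  have e8: "replace_col (colmat M (gfun K k y x) k) (col M x) (k-1) = colmat M (gfun K k y x) k"
    by (subst replace_colmat[OF M q], rule arg_cong[of _ _ "\<lambda>g. colmat M g k"], rule ext, use k2 in \<open>auto simp: gfun_def\<close>)
  have main: "F w x * F y z = F z x * F y w + F w z * F y x"
  proof -
    note X = pl_gen[OF A cy p q pq]
    have "det A * det (colmat M (gfun K k y z) k) = det (colmat M (gfun K k z x) k) * det (colmat M (gfun K k y w) k) + det (colmat M (gfun K k w z) k) * det (colmat M (gfun K k y x) k)"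
      using X unfolding e1 e3 e4 e5 e7 unfolding e2 e6 e8 .
    then show ?thesis unfolding F_def A_def .
  qed
  obtain a1 where a1: "a1 = 1 \<or> a1 = -1" "D w x = a1 * F w x" using FD dist notK in_n by metis
  obtain a2 where a2: "a2 = 1 \<or> a2 = -1" "D y z = a2 * F y z" using FD dist notK in_n by metis
  obtain a3 where a3: "a3 = 1 \<or> a3 = -1" "D z x = a3 * F z x" using FD dist notK in_n by metis
  obtain a4 where a4: "a4 = 1 \<or> a4 = -1" "D y w = a4 * F y w" using FD dist notK in_n by metis
  obtain a5 where a5: "a5 = 1 \<or> a5 = -1" "D w z = a5 * F w z" using FD dist notK in_n by metis
  obtain a6 where a6: "a6 = 1 \<or> a6 = -1" "D y x = a6 * F y x" using FD dist notK in_n by metis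
  have sq: "a * a = 1" if "a = 1 \<or> a = -1" for a :: 'a using that by auto
  have "D w x * D y z = (a1*a2*a3*a4) * (D z x * D y w) + (a1*a2*a5*a6) * (D w z * D y x)"
    by (rule sign_comb[OF sq[OF a3(1)] sq[OF a4(1)] sq[OF a5(1)] sq[OF a6(1)] a1(2) a2(2) a3(2) a4(2) a5(2) a6(2) main])
  moreover have "a1*a2*a3*a4 = 1 \<or> a1*a2*a3*a4 = -1" "a1*a2*a5*a6 = 1 \<or> a1*a2*a5*a6 = -1"
    using a1(1) a2(1) a3(1) a4(1) a5(1) a6(1) by auto
  ultimately show ?thesis unfolding D_def by blast
qed


definition PP :: "'a::comm_ring_1 mat \<Rightarrow> nat set \<Rightarrow> nat \<Rightarrow> nat \<Rightarrow> 'a" where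
  "PP L K x y = DeltaL L (insert x (insert y K))"
definition QQ :: "'a::comm_ring_1 mat \<Rightarrow> nat set \<Rightarrow> nat \<Rightarrow> nat \<Rightarrow> 'a" where
  "QQ R K x y = DeltaR R (insert x (insert y K))"

lemma PP_sym: "PP L K x y = PP L K y x" unfolding PP_def by (simp add: insert_commute)
lemma QQ_sym: "QQ R K x y = QQ R K y x" unfolding QQ_def by (simp add: insert_commute)

lemma DeltaR_T:
  assumes R: "R \<in> carrier_mat n k" and J: "J \<subseteq> {0..<n}" "card J = k"
  shows "DeltaR R J = DeltaL (transpose_mat R) J"
proof -
  have c1: "card {i. i < n \<and> i \<in> J} = k" using J by (metis (no_types, lifting) Collect_cong Int_def atLeastLessThan_iff inf.absorb_iff2 subset_eq Collect_mem_eq)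
  have c2: "card {j. j < k \<and> j \<in> {0..<k}} = k" by simp
  have fJ: "finite J" using J finite_subset by blast
  have pk: "pick {0..<k} i = i" if "i < k" for i
  proof -
    have "{a\<in>{0..<k}. a < i} = {0..<i}" using that by auto
    then show ?thesis using pick_card_in_set[of i "{0..<k}"] that by auto
  qed
  have pJ: "pick J j < n" if "j < k" for j using pick_in[OF fJ, of j] J that by auto
  have "transpose_mat (submatrix R J {0..<k}) = submatrix (transpose_mat R) {0..<k} J"
    using R by (intro eq_matI) (auto simp: submatrix_def c1 pk pJ)
  moreover have "submatrix R J {0..<k} \<in> carrier_mat k k"
    using R by (simp add: submatrix_def c1 c2)
  ultimately show ?thesis unfolding DeltaR_def DeltaL_def using R det_transpose
    by (metis carrier_matD(1,2) index_transpose_mat(2))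
qed

lemma five_alg:
  fixes qab :: "'a::field"
  assumes nz: "qab \<noteq> 0" "qac \<noteq> 0" "qad \<noteq> 0" "qag \<noteq> 0" "qbd \<noteq> 0" "qbg \<noteq> 0" "qcd \<noteq> 0" "qcg \<noteq> 0" "qdg \<noteq> 0"
    and T1: "qbd*qag = s1*(qdg*qab) + s2*(qbg*qad)" and T2: "qcd*qag = s3*(qdg*qac)+s4*(qcg*qad)"
  shows "qab*qcd/(qac*qbd) = (s3 * (qab*qdg/(qad*qbg)) + s4*(qab*qcg/(qac*qbg))) / (s1*(qab*qdg/(qad*qbg)) + s2)"
proof -
  have den: "s1*(qab*qdg/(qad*qbg)) + s2 = qbd*qag/(qbg*qad)"
    using T1 nz by (simp add: field_simps)
  have num: "s3 * (qab*qdg/(qad*qbg)) + s4*(qab*qcg/(qac*qbg)) = qab*qcd*qag/(qbg*qad*qac)"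
    using T2 nz by (simp add: field_simps)
  show ?thesis unfolding den num using nz by (simp add: field_simps)
qed

definition sg :: "'a::comm_ring_1 \<Rightarrow> bool" where "sg s \<longleftrightarrow> s = 1 \<or> s = -1"

locale mctx =
  fixes \<iota> :: "complex \<Rightarrow> 'a::field" and t :: "nat \<Rightarrow> 'a" and d k n :: nat
    and L R :: "'a mat"
  assumes S: "setting \<iota> t d" and Lc: "L \<in> carrier_mat k n" and Rc: "R \<in> carrier_mat n k"
    and SA1: "\<forall>J \<in> ksubsets k n. DeltaR R J \<noteq> 0"
    and SA2: "\<forall>J \<in> GG L k n. hh L R J \<in> Lam_units \<iota> t d"
begin

definition vf :: "nat set \<Rightarrow> bool" where "vf K \<longleftrightarrow> K \<subseteq> {0..<n} \<and> card K + 2 = k"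
definition ok :: "nat set \<Rightarrow> nat \<Rightarrow> bool" where "ok K x \<longleftrightarrow> x < n \<and> x \<notin> K"

lemma vf_ks: "vf K \<Longrightarrow> ok K x \<Longrightarrow> ok K y \<Longrightarrow> x \<noteq> y \<Longrightarrow> insert x (insert y K) \<in> ksubsets k n"
  unfolding vf_def ok_def ksubsets_def
  by (auto simp: card_insert_if finite_subset[of K "{0..<n}"])

lemma plP:
  assumes "vf K" "ok K w" "ok K x" "ok K y" "ok K z"
    "w \<noteq> x" "w \<noteq> y" "w \<noteq> z" "x \<noteq> y" "x \<noteq> z" "y \<noteq> z"
  shows "\<exists>s1 s2. sg s1 \<and> sg s2 \<and> PP L K w x * PP L K y z = s1 * (PP L K z x * PP L K y w) + s2 * (PP L K w z * PP L K y x)"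
  using plucker_L[OF Lc, of K w x y z] assms unfolding vf_def ok_def PP_def sg_def by auto

lemma plQ:
  assumes "vf K" "ok K w" "ok K x" "ok K y" "ok K z"
    "w \<noteq> x" "w \<noteq> y" "w \<noteq> z" "x \<noteq> y" "x \<noteq> z" "y \<noteq> z"
  shows "\<exists>s1 s2. sg s1 \<and> sg s2 \<and> QQ R K w x * QQ R K y z = s1 * (QQ R K z x * QQ R K y w) + s2 * (QQ R K w z * QQ R K y x)"
proof -
  have RT: "transpose_mat R \<in> carrier_mat k n" using Rc by simp
  have eq: "QQ R K u v = PP (transpose_mat R) K u v" if "ok K u" "ok K v" "u \<noteq> v" for u v
    using vf_ks[OF assms(1) that] DeltaR_T[OF Rc] unfolding QQ_def PP_def ksubsets_def by auto
  show ?thesis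
    using plucker_L[OF RT, of K w x y z] assms unfolding vf_def ok_def sg_def
    by (subst (1 2 3 4 5 6) eq, auto simp: ok_def PP_def)
qed

lemma Q_nz: "vf K \<Longrightarrow> ok K x \<Longrightarrow> ok K y \<Longrightarrow> x \<noteq> y \<Longrightarrow> QQ R K x y \<noteq> 0"
  using SA1 vf_ks unfolding QQ_def by blast

lemma ratio_F:
  assumes J: "J1 \<in> ksubsets k n" "J2 \<in> ksubsets k n" "J3 \<in> ksubsets k n" "J4 \<in> ksubsets k n"
    and nz: "DeltaL L J1 \<noteq> 0" "DeltaL L J2 \<noteq> 0" "DeltaL L J3 \<noteq> 0" "DeltaL L J4 \<noteq> 0"
    and s: "sg s" and eq: "DeltaL L J1 * DeltaL L J2 = s * (DeltaL L J3 * DeltaL L J4)"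
  shows "DeltaR R J1 * DeltaR R J2 / (DeltaR R J3 * DeltaR R J4) \<in> FracF \<iota> t d"
proof -
  have u: "hh L R J \<in> FracF \<iota> t d \<and> hh L R J \<noteq> 0" if "J \<in> ksubsets k n" "DeltaL L J \<noteq> 0" for J
    using F_unit[OF S] SA2 that unfolding GG_def by blast
  have r: "DeltaR R J \<noteq> 0" if "J \<in> ksubsets k n" for J using SA1 that by blast
  define h1 where "h1 = hh L R J1"
  define h2 where "h2 = hh L R J2"
  define h3 where "h3 = hh L R J3"
  define h4 where "h4 = hh L R J4"
  have hF: "h1 \<in> FracF \<iota> t d" "h2 \<in> FracF \<iota> t d" "h3 \<in> FracF \<iota> t d" "h4 \<in> FracF \<iota> t d"
    using u J nz unfolding h1_def h2_def h3_def h4_def by auto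
  have s2: "s * s = 1" using s unfolding sg_def by auto
  have sF: "s \<in> FracF \<iota> t d" using s F_1[OF S] F_neg[OF S] unfolding sg_def by auto
  have "DeltaR R J1 * DeltaR R J2 / (DeltaR R J3 * DeltaR R J4) = s * (h1 * h2 / (h3 * h4))"
  proof -
    have e: "h1 * h2 * (DeltaR R J3 * DeltaR R J4) = s * (h3 * h4) * (DeltaR R J1 * DeltaR R J2)"
      unfolding h1_def h2_def h3_def h4_def hh_def using eq
      by (simp add: algebra_simps)
    show ?thesis using e r J nz u s2 unfolding h1_def[symmetric] h2_def[symmetric] h3_def[symmetric] h4_def[symmetric]
      by (auto simp: field_simps hh_def h1_def h2_def h3_def h4_def)
  qed
  then show ?thesis using hF sF by (simp add: F_mult[OF S] F_div[OF S])
qed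


lemma sg_nz: "sg s \<Longrightarrow> s \<noteq> (0::'a)" unfolding sg_def by auto
lemma sg_F: "sg s \<Longrightarrow> s \<in> FracF \<iota> t d" using F_1[OF S] F_neg[OF S] unfolding sg_def by auto

lemma zrel:
  assumes v: "vf K" "ok K a" "ok K b" "ok K c" "ok K g"
    and dist: "a \<noteq> b" "a \<noteq> c" "a \<noteq> g" "b \<noteq> c" "b \<noteq> g" "c \<noteq> g"
    and z: "PP L K a g = 0"
  shows "\<exists>s. sg s \<and> PP L K a b * PP L K c g = s * (PP L K g b * PP L K c a)"
proof -
  obtain s1 s2 where "sg s1" "sg s2" "PP L K a b * PP L K c g = s1 * (PP L K g b * PP L K c a) + s2 * (PP L K a g * PP L K c b)"
    using plP[OF v, of] dist by blast
  then show ?thesis using z by auto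
qed

lemma nzprop:
  assumes v: "vf K" "ok K a" "ok K b" "ok K c" "ok K g"
    and dist: "a \<noteq> b" "a \<noteq> c" "a \<noteq> g" "b \<noteq> c" "b \<noteq> g" "c \<noteq> g"
    and z: "PP L K a g = 0" and nz: "PP L K g b \<noteq> 0" "PP L K a c \<noteq> 0"
  shows "PP L K c g \<noteq> 0"
proof
  assume "PP L K c g = 0"
  obtain s where "sg s" "PP L K a b * PP L K c g = s * (PP L K g b * PP L K c a)"
    using zrel[OF v dist z] by blast
  then show False using nz \<open>PP L K c g = 0\<close> sg_nz PP_sym[of L K c a] by auto
qed

lemma linr:
  assumes v: "vf K" "ok K a" "ok K b" "ok K c" "ok K g"
    and dist: "a \<noteq> b" "a \<noteq> c" "a \<noteq> g" "b \<noteq> c" "b \<noteq> g" "c \<noteq> g"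
    and z: "PP L K a g = 0" and nz: "PP L K a b \<noteq> 0" "PP L K g b \<noteq> 0" "PP L K a c \<noteq> 0"
  shows "QQ R K a b * QQ R K g c / (QQ R K a c * QQ R K g b) \<in> FracF \<iota> t d"
proof -
  have ncg: "PP L K c g \<noteq> 0" by (rule nzprop[OF v dist z nz(2,3)])
  obtain s where s: "sg s" "PP L K a b * PP L K c g = s * (PP L K g b * PP L K c a)"
    using zrel[OF v dist z] by blast
  have "QQ R K a b * QQ R K c g / (QQ R K g b * QQ R K c a) \<in> FracF \<iota> t d"
  proof -
    have nca: "PP L K c a \<noteq> 0" using nz(3) PP_sym by metis
    show ?thesis
      using ratio_F[OF vf_ks[OF v(1,2,3)] vf_ks[OF v(1,4,5)] vf_ks[OF v(1,5,3)] vf_ks[OF v(1,4,2)]] s nz ncg dist nca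
      unfolding PP_def QQ_def by auto
  qed
  then show ?thesis by (simp add: QQ_sym mult.commute)
qed

lemma five:
  assumes v: "vf K" "ok K a" "ok K b" "ok K c" "ok K dd" "ok K g"
    and dist: "a \<noteq> b" "a \<noteq> c" "a \<noteq> dd" "a \<noteq> g" "b \<noteq> c" "b \<noteq> dd" "b \<noteq> g" "c \<noteq> dd" "c \<noteq> g" "dd \<noteq> g"
    and z: "PP L K a g = 0" and nz: "PP L K a b \<noteq> 0" "PP L K a c \<noteq> 0" "PP L K a dd \<noteq> 0" "PP L K g b \<noteq> 0"
  shows "QQ R K a b * QQ R K c dd / (QQ R K a c * QQ R K b dd) \<in> FracF \<iota> t d"
proof -
  have L1: "QQ R K a b * QQ R K g c / (QQ R K a c * QQ R K g b) \<in> FracF \<iota> t d"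
    by (rule linr[OF v(1,2,3,4,6)]) (use dist z nz in auto)
  have L2: "QQ R K a b * QQ R K g dd / (QQ R K a dd * QQ R K g b) \<in> FracF \<iota> t d"
    by (rule linr[OF v(1,2,3,5,6)]) (use dist z nz in auto)
  obtain s1 s2 where s12: "sg s1" "sg s2" "QQ R K b dd * QQ R K a g = s1 * (QQ R K g dd * QQ R K a b) + s2 * (QQ R K b g * QQ R K a dd)"
    using plQ[OF v(1,3,5,2,6)] dist by metis
  obtain s3 s4 where s34: "sg s3" "sg s4" "QQ R K c dd * QQ R K a g = s3 * (QQ R K g dd * QQ R K a c) + s4 * (QQ R K c g * QQ R K a dd)"
    using plQ[OF v(1,4,5,2,6)] dist by metis
  have sym: "QQ R K g dd = QQ R K dd g" "QQ R K g c = QQ R K c g" "QQ R K g b = QQ R K b g" by (rule QQ_sym)+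
  have n1: "QQ R K a b \<noteq> 0" "QQ R K a c \<noteq> 0" "QQ R K a dd \<noteq> 0" "QQ R K a g \<noteq> 0" "QQ R K b dd \<noteq> 0"
      "QQ R K b g \<noteq> 0" "QQ R K c dd \<noteq> 0" "QQ R K c g \<noteq> 0" "QQ R K dd g \<noteq> 0"
    using Q_nz[OF v(1)] v dist by metis+
  have T1: "QQ R K b dd * QQ R K a g = s1 * (QQ R K dd g * QQ R K a b) + s2 * (QQ R K b g * QQ R K a dd)"
    using s12(3) unfolding sym .
  have T2: "QQ R K c dd * QQ R K a g = s3 * (QQ R K dd g * QQ R K a c) + s4 * (QQ R K c g * QQ R K a dd)"
    using s34(3) unfolding sym .
  note eq = five_alg[OF n1 T1 T2]
  have L1': "QQ R K a b * QQ R K c g / (QQ R K a c * QQ R K b g) \<in> FracF \<iota> t d"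
    using L1 unfolding sym .
  have L2': "QQ R K a b * QQ R K dd g / (QQ R K a dd * QQ R K b g) \<in> FracF \<iota> t d"
    using L2 unfolding sym .
  have N: "s3 * (QQ R K a b * QQ R K dd g / (QQ R K a dd * QQ R K b g)) + s4 * (QQ R K a b * QQ R K c g / (QQ R K a c * QQ R K b g)) \<in> FracF \<iota> t d"
    by (rule F_add[OF S, OF F_mult[OF S, OF sg_F[OF s34(1)] L2'] F_mult[OF S, OF sg_F[OF s34(2)] L1']])
  have D: "s1 * (QQ R K a b * QQ R K dd g / (QQ R K a dd * QQ R K b g)) + s2 \<in> FracF \<iota> t d"
    by (rule F_add[OF S, OF F_mult[OF S, OF sg_F[OF s12(1)] L2'] sg_F[OF s12(2)]])
  show ?thesis unfolding eq by (rule F_div[OF S, OF N D])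
qed

lemma col_exchange:
  assumes I: "I \<in> ksubsets k n" and nz: "DeltaL L I \<noteq> 0" and g: "\<gamma> < n" "\<gamma> \<notin> I"
    and col: "\<exists>r<k. L $$ (r, \<gamma>) \<noteq> 0"
  shows "\<exists>s\<in>I. DeltaL L (insert \<gamma> (I - {s})) \<noteq> 0"
proof (rule ccontr)
  assume con: "\<not> ?thesis"
  have dL: "dim_row L = k" by (rule carrier_matD(1)[OF Lc])
  have Isub: "I \<subseteq> {0..<n}" and cI: "card I = k" using I unfolding ksubsets_def by simp_all
  have fI: "finite I" using Isub by (rule finite_subset) simp
  define A where "A = colmat L (pick I) k"
  have A: "A \<in> carrier_mat k k" unfolding A_def colmat_def dL by simp
  have detA: "det A = DeltaL L I" unfolding DeltaL_def A_def dL sub_colmat[OF Lc Isub cI] ..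
  define b where "b = col L \<gamma>"
  have b: "b \<in> carrier_vec k" unfolding b_def by (rule carrier_vecI) (simp add: dL)
  have z: "(adj_mat A *\<^sub>v b) $ c = 0" if c: "c < k" for c
  proof -
    define h where "h = (pick I)(c := \<gamma>)"
    have pI: "x < k \<Longrightarrow> pick I x \<in> I" for x using pick_in[OF fI] cI by auto
    have inj: "inj_on h {0..<k}"
    proof (rule inj_onI)
      fix x y assume "x \<in> {0..<k}" "y \<in> {0..<k}" "h x = h y"
      then have xy: "x < k" "y < k" "h x = h y" by auto
      show "x = y"
      proof (cases "x = c \<or> y = c")
        case True
        then show ?thesis using xy pI g(2) unfolding h_def by (cases "x = c"; cases "y = c") auto
      next
        case False
        then have "pick I x = pick I y" using xy unfolding h_def by simp
        moreover have "inj_on (pick I) {0..<k}" using pick_inj[of I] cI by simp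
        ultimately show ?thesis using xy by (meson atLeastLessThan_iff inj_onD zero_le)
      qed
    qed
    have img: "h ` {0..<k} = insert \<gamma> (I - {pick I c})"
    proof -
      have e0: "{0..<k} = insert c ({0..<k} - {c})" using c by auto
      have e1: "h ` {0..<k} = insert (h c) (h ` ({0..<k} - {c}))" by (subst e0) (rule image_insert)
      have e2: "h ` ({0..<k} - {c}) = pick I ` ({0..<k} - {c})" unfolding h_def by (rule image_cong[OF refl]) simp
      have e3: "pick I ` ({0..<k} - {c}) = pick I ` {0..<k} - pick I ` {c}"
        by (rule inj_on_image_set_diff[of _ "{0..<k}"]) (use pick_inj[of I] cI c in auto)
      have e4: "pick I ` {0..<k} = I" using pick_range_eq[OF fI] cI by simp
      show ?thesis unfolding e1 e2 e3 e4 by (simp add: h_def)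
    qed
    have Jsub: "insert \<gamma> (I - {pick I c}) \<subseteq> {0..<n}" using Isub g by auto
    have cJ: "card (insert \<gamma> (I - {pick I c})) = k"
    proof -
      have "card (insert \<gamma> (I - {pick I c})) = Suc (card (I - {pick I c}))"
        using g(2) fI by (intro card_insert_disjoint) auto
      also have "card (I - {pick I c}) = card I - 1" using pI[OF c] by (rule card_Diff_singleton)
      finally show ?thesis using cI c by simp
    qed
    obtain s where "det (colmat L h k) = s * DeltaL L (insert \<gamma> (I - {pick I c}))"
      using colmat_sign[OF Lc Jsub cJ inj img] by blast
    moreover have "DeltaL L (insert \<gamma> (I - {pick I c})) = 0" using con pI[OF c] by blast
    moreover have "replace_col A b c = colmat L h k"
      unfolding A_def b_def h_def by (rule replace_colmat[OF Lc c])
    ultimately show ?thesis using adj_vec[OF A b c] by simp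
  qed
  have aA: "adj_mat A \<in> carrier_mat k k" by (rule adj_mat(1)[OF A])
  have "adj_mat A *\<^sub>v b = 0\<^sub>v k" by (rule eq_vecI) (use z aA in simp_all)
  moreover have "A *\<^sub>v 0\<^sub>v k = 0\<^sub>v k" by (rule eq_vecI) (use A in auto)
  ultimately have "det A \<cdot>\<^sub>v b = 0\<^sub>v k" using det_vec_adj[OF A b] by simp
  then have "det A * b $ r = 0" if "r < k" for r
  proof -
    have "(det A \<cdot>\<^sub>v b) $ r = det A * b $ r" using b that by simp
    moreover have "(0\<^sub>v k :: 'a vec) $ r = 0" using that by simp
    ultimately show ?thesis using \<open>det A \<cdot>\<^sub>v b = 0\<^sub>v k\<close> by metis
  qed
  then have bz: "b $ r = 0" if "r < k" for r using that nz detA by simp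
  obtain r where r: "r < k" "L $$ (r, \<gamma>) \<noteq> 0" using col by blast
  have "b $ r = L $$ (r, \<gamma>)" using dL r(1) unfolding b_def by (simp add: col_def)
  then show False using bz[OF r(1)] r(2) by simp
qed

end


lemma loop_alg:
  fixes a1 :: "'a::field"
  assumes sg: "s2 * s2 = 1" "s4 * s4 = 1"
    and nz: "a3 \<noteq> 0" "u \<noteq> 0" "b3 \<noteq> 0" "a7 \<noteq> 0" "b7 \<noteq> 0" "v \<noteq> 0"
    and r1: "a1*a2 = s1*(u*a3) + s2*(a7*v)" and r2: "b1*b2 = s3*(u*b3) + s4*(b7*v)"
  shows "b3*a7/(b7*a3) = (s2 * (a1*a2/(a3*u) - s1)) / (s4 * (b1*b2/(b3*u) - s3))"
proof -
  have A: "s2 * (a1*a2/(a3*u) - s1) = a7*v/(a3*u)"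
  proof -
    have "a1*a2/(a3*u) - s1 = s2*(a7*v)/(a3*u)" using r1 nz by (simp add: field_simps)
    then have "s2 * (a1*a2/(a3*u) - s1) = (s2*s2)*(a7*v)/(a3*u)" by (simp add: algebra_simps)
    then show ?thesis using sg by simp
  qed
  have B: "s4 * (b1*b2/(b3*u) - s3) = b7*v/(b3*u)"
  proof -
    have "b1*b2/(b3*u) - s3 = s4*(b7*v)/(b3*u)" using r2 nz by (simp add: field_simps)
    then have "s4 * (b1*b2/(b3*u) - s3) = (s4*s4)*(b7*v)/(b3*u)" by (simp add: algebra_simps)
    then show ?thesis using sg by simp
  qed
  show ?thesis unfolding A B using nz by (simp add: field_simps)
qed

context mctx begin

lemma sg_sq: "sg s \<Longrightarrow> s * s = (1::'a)" unfolding sg_def by auto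

lemma main_ctx:
  assumes SA3: "\<forall>c<n. \<exists>r<k. L $$ (r, c) \<noteq> 0"
    and I: "I \<in> ksubsets k n" and ij: "i \<in> I" "j \<in> I" "i \<noteq> j"
    and ab: "\<alpha> \<in> compl n I" "\<beta> \<in> compl n I" "\<alpha> \<noteq> \<beta>"
    and rad: "radical \<iota> t d L R I i j \<alpha> \<beta>"
  shows "\<forall>\<gamma> \<in> compl n I. \<gamma> \<noteq> \<alpha> \<longrightarrow> 0 \<notin># chi L R I i j \<alpha> \<gamma>"
proof (intro ballI impI)
  fix \<gamma> assume g: "\<gamma> \<in> compl n I" "\<gamma> \<noteq> \<alpha>"
  have Isub: "I \<subseteq> {0..<n}" and cI: "card I = k" using I unfolding ksubsets_def by simp_all
  have fI: "finite I" using Isub by (rule finite_subset) simp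
  define S where "S = I - {i, j}"
  have IS: "I = insert i (insert j S)" using ij unfolding S_def by auto
  have iS: "i \<notin> S" "j \<notin> S" unfolding S_def by auto
  have cS: "card S + 2 = k" using cI fI iS ij unfolding IS
    by (simp add: card_insert_if finite_subset[of S I] IS)
  have vS: "vf S" unfolding vf_def using cS Isub IS by auto
  have lt: "i < n" "j < n" "\<alpha> < n" "\<beta> < n" "\<gamma> < n" using Isub ij ab g unfolding compl_def by auto
  have nI: "\<alpha> \<notin> I" "\<beta> \<notin> I" "\<gamma> \<notin> I" using ab g unfolding compl_def by auto
  have okS: "ok S i" "ok S j" "ok S \<alpha>" "ok S \<beta>" "ok S \<gamma>" using lt nI iS IS unfolding ok_def by auto
  have dij: "\<alpha> \<noteq> i" "\<alpha> \<noteq> j" "\<beta> \<noteq> i" "\<beta> \<noteq> j" "\<gamma> \<noteq> i" "\<gamma> \<noteq> j" using nI ij by auto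
  have sw1i: "swap1 I i x = insert j (insert x S)" if "x \<notin> I" for x
    using that ij iS unfolding swap1_def IS by auto
  have sw1j: "swap1 I j x = insert i (insert x S)" if "x \<notin> I" for x
    using that ij iS unfolding swap1_def IS by auto
  have sw2: "swap2 I i j x y = insert x (insert y S)" for x y
    unfolding swap2_def S_def by auto
  have hh_nz: "hh L R J \<noteq> 0 \<longleftrightarrow> DeltaL L J \<noteq> 0" if "J \<in> ksubsets k n" for J
    using SA1 that unfolding hh_def by auto
  have ksS: "insert x (insert y S) \<in> ksubsets k n" if "ok S x" "ok S y" "x \<noteq> y" for x y
    by (rule vf_ks[OF vS that])
  have radc: "0 \<notin># chi L R I i j \<alpha> \<beta>" and Yn: "Yterm R I i j \<alpha> \<beta> \<notin> FracF \<iota> t d"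
    using rad unfolding radical_def by auto
  have r3: "hh L R I * hh L R (swap2 I i j \<alpha> \<beta>) \<noteq> 0" "hh L R (swap1 I i \<alpha>) * hh L R (swap1 I j \<beta>) \<noteq> 0"
    "hh L R (swap1 I i \<beta>) * hh L R (swap1 I j \<alpha>) \<noteq> 0"
    using radc unfolding chi_def by auto
  have Pij: "PP L S i j \<noteq> 0" using r3(1) unfolding PP_def IS[symmetric] hh_def by auto
  have Pab: "PP L S \<alpha> \<beta> \<noteq> 0" using r3(1) unfolding PP_def sw2 hh_def by auto
  have Pja: "PP L S j \<alpha> \<noteq> 0" using r3(2) unfolding PP_def sw1i[OF nI(1)] hh_def by auto
  have Pib: "PP L S i \<beta> \<noteq> 0" using r3(2) unfolding PP_def sw1j[OF nI(2)] hh_def by auto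
  have Pjb: "PP L S j \<beta> \<noteq> 0" using r3(3) unfolding PP_def sw1i[OF nI(2)] hh_def by auto
  have Pia: "PP L S i \<alpha> \<noteq> 0" using r3(3) unfolding PP_def sw1j[OF nI(1)] hh_def by auto
  have Yr: "QQ R S j \<alpha> * QQ R S i \<beta> / (QQ R S j \<beta> * QQ R S i \<alpha>) \<notin> FracF \<iota> t d"
  proof
    assume H: "QQ R S j \<alpha> * QQ R S i \<beta> / (QQ R S j \<beta> * QQ R S i \<alpha>) \<in> FracF \<iota> t d"
    define z where "z = sgn ((int i - int \<alpha>) * (int i - int \<beta>) * (int j - int \<alpha>) * (int j - int \<beta>))"
    have "Yterm R I i j \<alpha> \<beta> = (- of_int z) * (QQ R S j \<alpha> * QQ R S i \<beta> / (QQ R S j \<beta> * QQ R S i \<alpha>))"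
      unfolding Yterm_def z_def QQ_def sw1i[OF nI(1)] sw1i[OF nI(2)] sw1j[OF nI(1)] sw1j[OF nI(2)]
      by simp
    moreover have "(- of_int z :: 'a) \<in> FracF \<iota> t d" by (rule F_neg[OF S F_of_int[OF S]])
    ultimately show False using Yn H F_mult[OF S] by metis
  qed
  have goal: "PP L S i \<gamma> \<noteq> 0 \<and> PP L S j \<gamma> \<noteq> 0 \<and> PP L S \<alpha> \<gamma> \<noteq> 0"
  proof (cases "\<gamma> = \<beta>")
    case True
    then show ?thesis using Pib Pjb Pab by simp
  next
    case gb: False
    have dg: "\<gamma> \<noteq> \<alpha>" "\<gamma> \<noteq> \<beta>" "\<gamma> \<noteq> i" "\<gamma> \<noteq> j" using g(2) gb dij by auto
    have dab: "\<alpha> \<noteq> \<beta>" "i \<noteq> j" using ab(3) ij(3) .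
    have PI: "DeltaL L I \<noteq> 0" using Pij unfolding PP_def IS[symmetric] .
    show ?thesis
    proof (rule ccontr)
      assume neg: "\<not> (PP L S i \<gamma> \<noteq> 0 \<and> PP L S j \<gamma> \<noteq> 0 \<and> PP L S \<alpha> \<gamma> \<noteq> 0)"
      show False
      proof (cases "PP L S i \<gamma> = 0 \<and> PP L S j \<gamma> = 0")
        case False
        then consider (B) "PP L S i \<gamma> = 0" "PP L S j \<gamma> \<noteq> 0" | (C) "PP L S j \<gamma> = 0" "PP L S i \<gamma> \<noteq> 0"
          | (D) "PP L S i \<gamma> \<noteq> 0" "PP L S j \<gamma> \<noteq> 0" "PP L S \<alpha> \<gamma> = 0" using neg by auto
        then show False
        proof cases
          case B
          have Pbg: "PP L S \<beta> \<gamma> \<noteq> 0"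
            by (rule nzprop[OF vS okS(1) okS(2) okS(4) okS(5)])
               (use dij dg dab B Pib PP_sym[of L S \<gamma> j] in auto)
          have "QQ R S i \<beta> * QQ R S \<alpha> j / (QQ R S i \<alpha> * QQ R S \<beta> j) \<in> FracF \<iota> t d"
            by (rule five[OF vS okS(1) okS(4) okS(3) okS(2) okS(5)])
               (use dij dg dab B Pib Pia Pij Pbg PP_sym[of L S \<gamma> \<beta>] in auto)
          moreover have "QQ R S i \<beta> * QQ R S \<alpha> j / (QQ R S i \<alpha> * QQ R S \<beta> j) = QQ R S j \<alpha> * QQ R S i \<beta> / (QQ R S j \<beta> * QQ R S i \<alpha>)"
            by (simp add: QQ_sym[of R S \<alpha> j] QQ_sym[of R S \<beta> j] mult.commute)
          ultimately show False using Yr by simp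
        next
          case C
          have Pag: "PP L S \<alpha> \<gamma> \<noteq> 0"
            by (rule nzprop[OF vS okS(2) okS(1) okS(3) okS(5)])
               (use dij dg dab C Pja PP_sym[of L S \<gamma> i] in auto)
          have "QQ R S j \<alpha> * QQ R S \<beta> i / (QQ R S j \<beta> * QQ R S \<alpha> i) \<in> FracF \<iota> t d"
            by (rule five[OF vS okS(2) okS(3) okS(4) okS(1) okS(5)])
               (use dij dg dab C Pja Pjb Pij Pag PP_sym[of L S \<gamma> \<alpha>] PP_sym[of L S j i] in auto)
          moreover have "QQ R S j \<alpha> * QQ R S \<beta> i / (QQ R S j \<beta> * QQ R S \<alpha> i) = QQ R S j \<alpha> * QQ R S i \<beta> / (QQ R S j \<beta> * QQ R S i \<alpha>)"
            by (simp add: QQ_sym[of R S \<alpha> i] QQ_sym[of R S \<beta> i])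
          ultimately show False using Yr by simp
        next
          case D
          have "QQ R S \<alpha> j * QQ R S i \<beta> / (QQ R S \<alpha> i * QQ R S j \<beta>) \<in> FracF \<iota> t d"
            by (rule five[OF vS okS(3) okS(2) okS(1) okS(4) okS(5)])
               (use dij dg dab D Pja Pia Pab PP_sym[of L S \<gamma> j] PP_sym[of L S \<alpha> j] PP_sym[of L S \<alpha> i] in auto)
          moreover have "QQ R S \<alpha> j * QQ R S i \<beta> / (QQ R S \<alpha> i * QQ R S j \<beta>) = QQ R S j \<alpha> * QQ R S i \<beta> / (QQ R S j \<beta> * QQ R S i \<alpha>)"
            by (simp add: QQ_sym[of R S \<alpha> i] QQ_sym[of R S \<alpha> j] mult.commute)
          ultimately show False using Yr by simp
        qed
      next
        case True
        then have Z: "PP L S i \<gamma> = 0" "PP L S j \<gamma> = 0" by auto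
        obtain s where s: "s \<in> I" "DeltaL L (insert \<gamma> (I - {s})) \<noteq> 0"
          using col_exchange[OF I PI lt(5) nI(3)] SA3 lt(5) by blast
        have si: "s \<noteq> i"
        proof
          assume "s = i"
          then have "insert \<gamma> (I - {s}) = insert j (insert \<gamma> S)" using iS ij unfolding IS by auto
          then show False using s(2) Z(2) unfolding PP_def by simp
        qed
        have sj: "s \<noteq> j"
        proof
          assume "s = j"
          then have "insert \<gamma> (I - {s}) = insert i (insert \<gamma> S)" using iS ij unfolding IS by auto
          then show False using s(2) Z(1) unfolding PP_def by simp
        qed
        have sS: "s \<in> S" using s(1) si sj unfolding IS by auto
        define T where "T = S - {s}"
        have ST: "S = insert s T" and sT: "s \<notin> T" using sS unfolding T_def by auto
        have iT: "i \<notin> T" "j \<notin> T" using iS unfolding T_def by auto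
        have fS: "finite S" using vS unfolding vf_def by (meson finite_atLeastLessThan finite_subset)
        have cT: "card S = Suc (card T)" using fS sT unfolding ST by simp
        define Ki where "Ki = insert i T"
        define Kj where "Kj = insert j T"
        have fT: "finite T" using fS unfolding ST by simp
        have vKi: "vf Ki" using vS cT iT ST lt fT sT unfolding vf_def Ki_def by auto
        have vKj: "vf Kj" using vS cT iT ST lt fT sT unfolding vf_def Kj_def by auto
        have slt: "s < n" using s(1) Isub by auto
        have TI: "x \<notin> I \<Longrightarrow> x \<notin> T" for x unfolding IS ST by auto
        have okKi: "ok Ki s" "ok Ki \<gamma>" "ok Ki j" "ok Ki \<alpha>" "ok Ki \<beta>"
          using okS si sT iT dij ij TI nI slt unfolding ok_def Ki_def ST by auto
        have okKj: "ok Kj s" "ok Kj \<gamma>" "ok Kj i" "ok Kj \<alpha>" "ok Kj \<beta>"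
          using okS sj sT iT dij ij TI nI slt unfolding ok_def Kj_def ST by auto
        have PKi: "PP L Ki s x = PP L S i x" for x unfolding PP_def Ki_def ST by (simp add: insert_commute)
        have PKj: "PP L Kj s x = PP L S j x" for x unfolding PP_def Kj_def ST by (simp add: insert_commute)
        have Is: "I - {s} = insert i (insert j T)" unfolding IS ST using sT si sj by auto
        have Pgj: "PP L Ki \<gamma> j \<noteq> 0" using s(2) unfolding PP_def Ki_def Is by (simp add: insert_commute)
        have Pgi: "PP L Kj \<gamma> i \<noteq> 0" using s(2) unfolding PP_def Kj_def Is by (simp add: insert_commute)
        have dsx: "s \<noteq> \<alpha>" "s \<noteq> \<beta>" "s \<noteq> \<gamma>" using sS okS unfolding ok_def by auto
        have FA: "QQ R Ki s j * QQ R Ki \<alpha> \<beta> / (QQ R Ki s \<alpha> * QQ R Ki j \<beta>) \<in> FracF \<iota> t d"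
          by (rule five[OF vKi okKi(1) okKi(3) okKi(4) okKi(5) okKi(2)])
             (use dij dg dab dsx sj Z PKi Pij Pia Pib Pgj in auto)
        have FB: "QQ R Kj s i * QQ R Kj \<alpha> \<beta> / (QQ R Kj s \<alpha> * QQ R Kj i \<beta>) \<in> FracF \<iota> t d"
          by (rule five[OF vKj okKj(1) okKj(3) okKj(4) okKj(5) okKj(2)])
             (use dij dg dab dsx si Z PKj Pij Pja Pjb Pgi PP_sym[of L S j i] in auto)
        obtain s1 s2 where s12: "sg s1" "sg s2"
          "QQ R Ki s j * QQ R Ki \<alpha> \<beta> = s1 * (QQ R Ki \<beta> j * QQ R Ki \<alpha> s) + s2 * (QQ R Ki s \<beta> * QQ R Ki \<alpha> j)"
          using plQ[OF vKi okKi(1) okKi(3) okKi(4) okKi(5)] dij dab dsx sj by metis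
        obtain s3 s4 where s34: "sg s3" "sg s4"
          "QQ R Kj s i * QQ R Kj \<alpha> \<beta> = s3 * (QQ R Kj \<beta> i * QQ R Kj \<alpha> s) + s4 * (QQ R Kj s \<beta> * QQ R Kj \<alpha> i)"
          using plQ[OF vKj okKj(1) okKj(3) okKj(4) okKj(5)] dij dab dsx si by metis
        have e1: "QQ R Ki \<beta> j = QQ R Ki j \<beta>" "QQ R Ki \<alpha> s = QQ R Ki s \<alpha>" "QQ R Kj \<alpha> s = QQ R Kj s \<alpha>"
          by (rule QQ_sym)+
        have e2: "QQ R Kj \<beta> i = QQ R Ki j \<beta>" "QQ R Kj i \<beta> = QQ R Ki j \<beta>" "QQ R Kj \<alpha> i = QQ R Ki \<alpha> j"
          unfolding QQ_def Ki_def Kj_def by (simp_all add: insert_commute)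
        have nzq: "QQ R Ki s \<alpha> \<noteq> 0" "QQ R Ki j \<beta> \<noteq> 0" "QQ R Kj s \<alpha> \<noteq> 0" "QQ R Ki s \<beta> \<noteq> 0"
          "QQ R Kj s \<beta> \<noteq> 0" "QQ R Ki \<alpha> j \<noteq> 0"
          using Q_nz[OF vKi] Q_nz[OF vKj] okKi okKj dij dab dsx si sj by metis+
        have r1: "QQ R Ki s j * QQ R Ki \<alpha> \<beta> = s1 * (QQ R Ki j \<beta> * QQ R Ki s \<alpha>) + s2 * (QQ R Ki s \<beta> * QQ R Ki \<alpha> j)"
          using s12(3) unfolding e1 .
        have r2: "QQ R Kj s i * QQ R Kj \<alpha> \<beta> = s3 * (QQ R Ki j \<beta> * QQ R Kj s \<alpha>) + s4 * (QQ R Kj s \<beta> * QQ R Ki \<alpha> j)"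
          using s34(3) unfolding e1 e2 .
        note LA = loop_alg[OF sg_sq[OF s12(2)] sg_sq[OF s34(2)] nzq r1 r2]
        have FB': "QQ R Kj s i * QQ R Kj \<alpha> \<beta> / (QQ R Kj s \<alpha> * QQ R Ki j \<beta>) \<in> FracF \<iota> t d"
          using FB unfolding e2 .
        have "QQ R Kj s \<alpha> * QQ R Ki s \<beta> / (QQ R Kj s \<beta> * QQ R Ki s \<alpha>) \<in> FracF \<iota> t d"
          unfolding LA
          by (rule F_div[OF S, OF F_mult[OF S, OF sg_F[OF s12(2)] F_diff[OF S, OF FA sg_F[OF s12(1)]]]
                                  F_mult[OF S, OF sg_F[OF s34(2)] F_diff[OF S, OF FB' sg_F[OF s34(1)]]]])
        moreover have "QQ R Kj s \<alpha> = QQ R S j \<alpha>" "QQ R Ki s \<beta> = QQ R S i \<beta>" "QQ R Kj s \<beta> = QQ R S j \<beta>" "QQ R Ki s \<alpha> = QQ R S i \<alpha>"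
          unfolding QQ_def Ki_def Kj_def ST by (simp_all add: insert_commute)
        ultimately show False using Yr by simp
      qed
    qed
  qed
  show "0 \<notin># chi L R I i j \<alpha> \<gamma>"
  proof -
    have "hh L R I \<noteq> 0" using r3(1) by auto
    moreover have "hh L R (swap2 I i j \<alpha> \<gamma>) \<noteq> 0" unfolding sw2 hh_nz[OF ksS[OF okS(3) okS(5) g(2)[symmetric]]]
      using goal unfolding PP_def by simp
    moreover have "hh L R (swap1 I i \<alpha>) \<noteq> 0" using r3(2) by auto
    moreover have "hh L R (swap1 I j \<gamma>) \<noteq> 0" unfolding sw1j[OF nI(3)] hh_nz[OF ksS[OF okS(1) okS(5) dij(5)[symmetric]]]
      using goal unfolding PP_def by simp
    moreover have "hh L R (swap1 I i \<gamma>) \<noteq> 0" unfolding sw1i[OF nI(3)] hh_nz[OF ksS[OF okS(2) okS(5) dij(6)[symmetric]]]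
      using goal unfolding PP_def by simp
    moreover have "hh L R (swap1 I j \<alpha>) \<noteq> 0" using r3(3) by auto
    ultimately show ?thesis unfolding chi_def by simp
  qed
qed

end
theorem mainTheorem4:
  fixes \<iota> :: "complex \<Rightarrow> 'a::alg_closed_field" and t :: "nat \<Rightarrow> 'a" and d k n :: nat
    and L R :: "'a mat" and I :: "nat set" and i j \<alpha> \<beta> :: nat
  assumes "setting \<iota> t d" and "d \<ge> 1" and "1 \<le> k" and "k \<le> n"
    and "L \<in> carrier_mat k n" and "R \<in> carrier_mat n k"
    and SA1: "\<forall>J \<in> ksubsets k n. DeltaR R J \<noteq> 0"
    and SA2: "\<forall>J \<in> GG L k n. hh L R J \<in> Lam_units \<iota> t d"
    and SA3: "\<forall>c<n. \<exists>r<k. L $$ (r, c) \<noteq> 0"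
    and "I \<in> ksubsets k n" and "i \<in> I" and "j \<in> I" and "i \<noteq> j"
    and "\<alpha> \<in> compl n I" and "\<beta> \<in> compl n I" and "\<alpha> \<noteq> \<beta>"
    and "radical \<iota> t d L R I i j \<alpha> \<beta>"
  shows "\<forall>\<gamma> \<in> compl n I. \<gamma> \<noteq> \<alpha> \<longrightarrow> 0 \<notin># chi L R I i j \<alpha> \<gamma>"
proof -
  interpret mctx \<iota> t d k n L R by (rule mctx.intro[OF assms(1) assms(5) assms(6) SA1 SA2])
  show ?thesis by (rule main_ctx[OF SA3 assms(10-17)])
qed

end
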